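(* Let $\Gamma$ be a finite simplicial graph with vertex set $V=\{a_0,\ldots,a_{n-1}\}$ ($n\ge1$), let $M$ be a positive integer, $B(M)=\{w\in A(\Gamma):\|w\|\le M\}$, and let $\sigma$ be defined on words as in the context. Then: (1) $\sigma$ gives a well-defined map $B(M)\to A(\Gamma)$; that is, if two words $s_1^{e_1}\cdots s_\ell^{e_\ell}$ and $t_1^{d_1}\cdots t_\ell^{d_\ell}$ of length $\ell=\|w\|$ represent the same element $w\in B(M)$, then their images under $\sigma$ are equal in $A(\Gamma)$. (2) If $s_1^{e_1}\cdots s_\ell^{e_\ell}$ is a canonical expression for $w\in B(M)$ and $\sigma(w)=s_1^{N_1}\cdots s_\ell^{N_\ell}$ as in the context, then $(s_1^{N_1},\ldots,s_\ell^{N_\ell})$ is a subsequence of the sequence $(u_i)_{i\ge0}$, i.e. there are indices $j_1<j_2<\cdots<j_\ell$ with $s_k^{N_k}=u_{j_k}$ for all $k$.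
   Context: $A(\Gamma)=\langle V\mid[a,b]=1\text{ for }\{a,b\}\in E(\Gamma)\rangle$; $\|w\|$ is the word length with respect to $V$. For a word $s_1^{e_1}\cdots s_\ell^{e_\ell}$ ($s_i\in V$, $e_i\in\{\pm1\}$, $\ell=\|w\|$) representing $w$, its right-counting vector $(f_1,\ldots,f_\ell)$ has $f_i=\min\|y\|$ over $y\in A(\Gamma)$ such that $s_i^{e_i}\cdots s_\ell^{e_\ell}=x\,s_i^{e_i}\,y$ for some $x\in\langle\mathrm{lk}_\Gamma(s_i)\rangle$ ($\mathrm{lk}_\Gamma(s)$ = vertices adjacent to $s$). The word is a canonical expression if (A) $f_1\ge\cdots\ge f_\ell$ and (B) whenever $f_i=f_j$, $i<j$, $s_i=a_p$, $s_j=a_q$, then $p<q$ and $[a_p,a_q]=1$. Define $N_i=\frac{3e_i-1}{2}\cdot 4^{M-1-f_i}$ and $\sigma(s_1^{e_1}\cdots s_\ell^{e_\ell})=s_1^{N_1}s_2^{N_2}\cdots s_\ell^{N_\ell}\in A(\Gamma)$. The sequence $(u_i)$: for $i\ge0$, $0\le j<2n$, $u_{2ni+j}=a_{\lfloor j/2\rfloor}^{\,r_{i,j}}$ with $r_{i,j}=(-2)^{2i+j-2\lfloor j/2\rfloor}$ (so $u_0=a_0,u_1=a_0^{-2},u_2=a_1,u_3=a_1^{-2},\ldots,u_{2n}=a_0^4,u_{2n+1}=a_0^{-8},\ldots$). *)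

theory Defs
  imports Main
begin

text \<open>Vertices of \<Gamma> are the naturals 0..n-1 (vertex p stands for a_p).
A letter is a generator with a sign: (p, True) = a_p, (p, False) = a_p^-1.
Words are letter lists; elements of the right-angled Artin group A(\<Gamma>) are
represented by words modulo the congruence generated by free cancellation
x x^-1 = 1 and the commutation of letters on adjacent vertices.\<close>

type_synonym letter = "nat \<times> bool"

definition inv_letter :: "letter \<Rightarrow> letter" where
  "inv_letter x = (fst x, \<not> snd x)"

inductive raag_step :: "(nat \<Rightarrow> nat \<Rightarrow> bool) \<Rightarrow> letter list \<Rightarrow> letter list \<Rightarrow> bool"
  for E where
  cancel: "raag_step E (u @ [x, inv_letter x] @ v) (u @ v)"
| comm: "E (fst x) (fst y) \<Longrightarrow> raag_step E (u @ [x, y] @ v) (u @ [y, x] @ v)"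

definition raag_eq :: "(nat \<Rightarrow> nat \<Rightarrow> bool) \<Rightarrow> letter list \<Rightarrow> letter list \<Rightarrow> bool" where
  "raag_eq E = equivclp (raag_step E)"

definition raag_norm :: "(nat \<Rightarrow> nat \<Rightarrow> bool) \<Rightarrow> letter list \<Rightarrow> nat" where
  "raag_norm E w = (LEAST m. \<exists>v. raag_eq E v w \<and> length v = m)"

definition simplicial_graph :: "nat \<Rightarrow> (nat \<Rightarrow> nat \<Rightarrow> bool) \<Rightarrow> bool" where
  "simplicial_graph n E \<longleftrightarrow> (\<forall>a b. E a b \<longrightarrow> E b a) \<and> (\<forall>a. \<not> E a a)
      \<and> (\<forall>a b. E a b \<longrightarrow> a < n \<and> b < n)"

definition word_over :: "nat \<Rightarrow> letter list \<Rightarrow> bool" where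
  "word_over n ws \<longleftrightarrow> (\<forall>c \<in> set ws. fst c < n)"

text \<open>Right-counting vector entry f_i (0-based index i): the minimal ||y|| such
that s_i^{e_i} ... s_l^{e_l} = x s_i^{e_i} y with x in the subgroup generated by
lk(s_i), i.e. x represented by a word in the letters of lk(s_i).\<close>
definition rcount :: "(nat \<Rightarrow> nat \<Rightarrow> bool) \<Rightarrow> letter list \<Rightarrow> nat \<Rightarrow> nat" where
  "rcount E ws i = (LEAST m. \<exists>x y. (\<forall>c \<in> set x. E (fst (ws ! i)) (fst c))
       \<and> raag_eq E (drop i ws) (x @ [ws ! i] @ y) \<and> raag_norm E y = m)"

definition canonical_expr :: "(nat \<Rightarrow> nat \<Rightarrow> bool) \<Rightarrow> letter list \<Rightarrow> bool" where
  "canonical_expr E ws \<longleftrightarrow>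
     (\<forall>i j. i < j \<and> j < length ws \<longrightarrow> rcount E ws j \<le> rcount E ws i) \<and>
     (\<forall>i j. i < j \<and> j < length ws \<and> rcount E ws i = rcount E ws j \<longrightarrow>
        fst (ws ! i) < fst (ws ! j) \<and>
        raag_eq E [(fst (ws ! i), True), (fst (ws ! j), True)]
                  [(fst (ws ! j), True), (fst (ws ! i), True)])"

text \<open>N_i = ((3 e_i - 1)/2) * 4^(M-1-f_i).\<close>
definition sig_exp :: "(nat \<Rightarrow> nat \<Rightarrow> bool) \<Rightarrow> nat \<Rightarrow> letter list \<Rightarrow> nat \<Rightarrow> int" where
  "sig_exp E M ws i = (if snd (ws ! i) then 1 else -2) * 4 ^ (M - 1 - rcount E ws i)"

definition gpow :: "nat \<Rightarrow> int \<Rightarrow> letter list" where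
  "gpow a N = replicate (nat \<bar>N\<bar>) (a, N > 0)"

definition sigma :: "(nat \<Rightarrow> nat \<Rightarrow> bool) \<Rightarrow> nat \<Rightarrow> letter list \<Rightarrow> letter list" where
  "sigma E M ws = concat (map (\<lambda>i. gpow (fst (ws ! i)) (sig_exp E M ws i)) [0..<length ws])"

text \<open>u_k as a pair (generator index, exponent):
u_{2ni+j} = a_{j div 2}^{(-2)^(2i + j - 2 (j div 2))}.\<close>
definition useq :: "nat \<Rightarrow> nat \<Rightarrow> nat \<times> int" where
  "useq n k = (k mod (2*n) div 2, (-2::int) ^ (2 * (k div (2*n)) + k mod (2*n) mod 2))"

end

theory Submission
  imports Defs
begin

lemma raag_eq_refl[simp]: "raag_eq E w w"
  by (simp add: raag_eq_def)
lemma raag_eq_sym: "raag_eq E u v \<Longrightarrow> raag_eq E v u"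
  by (simp add: raag_eq_def equivclp_sym)
lemma raag_eq_trans: "raag_eq E u v \<Longrightarrow> raag_eq E v w \<Longrightarrow> raag_eq E u w"
  unfolding raag_eq_def by (rule equivclp_trans)
lemma raag_step_eq: "raag_step E u v \<Longrightarrow> raag_eq E u v"
  unfolding raag_eq_def by blast

lemma raag_step_app: "raag_step E u v \<Longrightarrow> raag_step E (a@u@b) (a@v@b)"
proof (induction rule: raag_step.induct)
  case (cancel u x v)
  then show ?case using raag_step.cancel[of E "a@u" x "v@b"] by simp
next
  case (comm x y u v)
  then show ?case using raag_step.comm[of E x y "a@u" "v@b"] by simp
qed

lemma raag_eq_app: "raag_eq E u v \<Longrightarrow> raag_eq E (a@u@b) (a@v@b)"
  unfolding raag_eq_def
proof (induction rule: equivclp_induct)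
  case base
  then show ?case by simp
next
  case (step y z)
  then show ?case
    by (meson equivclp_into_equivclp raag_step_app)
qed

lemma raag_eq_append: "raag_eq E u u' \<Longrightarrow> raag_eq E v v' \<Longrightarrow> raag_eq E (u@v) (u'@v')"
  using raag_eq_app[of E u u' "[]" v] raag_eq_app[of E v v' u' "[]"] raag_eq_trans by fastforce

lemma raag_eq_cons: "raag_eq E u u' \<Longrightarrow> raag_eq E (x#u) (x#u')"
  using raag_eq_append[of E "[x]" "[x]" u u'] by simp

lemma raag_norm_le: "raag_eq E v w \<Longrightarrow> raag_norm E w \<le> length v"
  unfolding raag_norm_def by (rule Least_le) auto

lemma comm_block1: "(\<forall>y\<in>set Y. E (fst x) (fst y)) \<Longrightarrow> raag_eq E (x#Y) (Y@[x])"
proof (induction Y)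
  case Nil
  then show ?case by simp
next
  case (Cons y Y)
  have "raag_step E ([]@[x,y]@Y) ([]@[y,x]@Y)" by (rule raag_step.comm) (use Cons in auto)
  then have "raag_eq E (x#y#Y) (y#x#Y)" by (simp add: raag_step_eq)
  moreover have "raag_eq E (y#x#Y) (y#Y@[x])" using Cons by (auto intro: raag_eq_cons)
  ultimately show ?case using raag_eq_trans by fastforce
qed

lemma comm_block: "(\<forall>x\<in>set X. \<forall>y\<in>set Y. E (fst x) (fst y)) \<Longrightarrow> raag_eq E (X@Y) (Y@X)"
proof (induction X)
  case Nil
  then show ?case by simp
next
  case (Cons x X)
  have "raag_eq E (x#X@Y) (x#Y@X)" using Cons by (auto intro: raag_eq_cons)
  moreover have "raag_eq E (x#Y@X) (Y@[x]@X)"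
    using comm_block1[of Y E x] Cons.prems raag_eq_append[of E "x#Y" "Y@[x]" X X] by auto
  ultimately show ?case using raag_eq_trans by fastforce
qed

definition idx :: "nat \<Rightarrow> nat \<Rightarrow> nat \<Rightarrow> nat" where
  "idx i j m = (if m < i then m else if Suc m < j then Suc m else Suc (Suc m))"
definition del2 :: "nat \<Rightarrow> nat \<Rightarrow> 'a list \<Rightarrow> 'a list" where
  "del2 i j u = map (\<lambda>m. u ! idx i j m) [0..<length u - 2]"
definition tau :: "nat \<Rightarrow> nat \<Rightarrow> nat" where
  "tau k m = (if m = k then Suc k else if m = Suc k then k else m)"
definition swp :: "nat \<Rightarrow> 'a list \<Rightarrow> 'a list" where
  "swp k u = map (\<lambda>m. u ! tau k m) [0..<length u]"

lemma del2_len[simp]: "length (del2 i j u) = length u - 2" by (simp add: del2_def)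
lemma del2_nth[simp]: "m < length u - 2 \<Longrightarrow> del2 i j u ! m = u ! idx i j m" by (simp add: del2_def)
lemma swp_len[simp]: "length (swp k u) = length u" by (simp add: swp_def)
lemma swp_nth[simp]: "m < length u \<Longrightarrow> swp k u ! m = u ! tau k m" by (simp add: swp_def)

definition Rst :: "(nat \<Rightarrow> nat \<Rightarrow> bool) \<Rightarrow> letter list \<Rightarrow> letter list \<Rightarrow> bool" where
  "Rst E u a \<longleftrightarrow> (\<exists>i j. i < j \<and> j < length u \<and> u!j = inv_letter (u!i)
     \<and> (\<forall>k. i < k \<and> k < j \<longrightarrow> E (fst (u!i)) (fst (u!k))) \<and> a = del2 i j u)"
definition Cst :: "(nat \<Rightarrow> nat \<Rightarrow> bool) \<Rightarrow> letter list \<Rightarrow> letter list \<Rightarrow> bool" where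
  "Cst E u v \<longleftrightarrow> (\<exists>k. Suc k < length u \<and> E (fst (u!k)) (fst (u!Suc k)) \<and> v = swp k u)"

lemma Cst_raag: assumes "Cst E u v" shows "raag_eq E u v"
proof -
  obtain k where k: "Suc k < length u" "E (fst (u!k)) (fst (u!Suc k))" "v = swp k u"
    using assms Cst_def by blast
  have u: "u = take k u @ [u!k, u!Suc k] @ drop (Suc (Suc k)) u"
    using k(1) by (simp add: Cons_nth_drop_Suc)
  have aux: "\<And>i. \<not> i < k \<Longrightarrow> i \<noteq> k \<Longrightarrow> i \<noteq> Suc k \<Longrightarrow> Suc (Suc (i - 2)) = i" by arith
  have v: "v = take k u @ [u!Suc k, u!k] @ drop (Suc (Suc k)) u"
    using k(1) by (auto simp: k(3) nth_append tau_def aux intro!: nth_equalityI)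
  show ?thesis using raag_step.comm[of E "u!k" "u!Suc k" "take k u" "drop (Suc (Suc k)) u", OF k(2)] u v
    by (metis raag_step_eq)
qed

lemma Rst_len: "Rst E u a \<Longrightarrow> length a + 2 = length u"
  unfolding Rst_def by auto

lemma Rst_raag: assumes "Rst E u a" shows "raag_eq E u a"
proof -
  obtain i j where ij: "i < j" "j < length u" "u!j = inv_letter (u!i)"
    "\<forall>k. i < k \<and> k < j \<longrightarrow> E (fst (u!i)) (fst (u!k))" "a = del2 i j u"
    using assms Rst_def by blast
  define mid where "mid = take (j - Suc i) (drop (Suc i) u)"
  have d1: "drop i u = u!i # drop (Suc i) u" using ij by (simp add: Cons_nth_drop_Suc)
  have d2: "drop (Suc i) u = mid @ drop j u"
    unfolding mid_def using ij by (metis Suc_leI append_take_drop_id drop_drop le_add_diff_inverse2)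
  have d3: "drop j u = u!j # drop (Suc j) u" using ij(2) by (rule Cons_nth_drop_Suc[symmetric])
  have u: "u = take i u @ [u!i] @ mid @ [u!j] @ drop (Suc j) u"
    using d1 d2 d3 by (metis append_Cons append_Nil append_take_drop_id)
  have a: "a = take i u @ mid @ drop (Suc j) u"
    using ij(1,2) unfolding mid_def ij(5)
    by (auto simp: nth_append min_def idx_def intro!: nth_equalityI)
  have midc: "\<forall>y\<in>set mid. E (fst (u!i)) (fst y)"
  proof
    fix y assume "y \<in> set mid"
    then obtain t where t: "t < j - Suc i" "y = u ! Suc (i + t)" unfolding mid_def using ij
      by (auto simp: in_set_conv_nth)
    show "E (fst (u!i)) (fst y)" using ij(4) t by auto
  qed
  have "raag_eq E (u!i # mid) (mid @ [u!i])" using comm_block1 midc by blast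
  then have 1: "raag_eq E u (take i u @ mid @ [u!i, u!j] @ drop (Suc j) u)"
    using raag_eq_app[of E "u!i # mid" "mid @ [u!i]" "take i u" "[u!j] @ drop (Suc j) u"] u
    by simp
  have 2: "raag_step E ((take i u @ mid) @ [u!i, u!j] @ drop (Suc j) u) ((take i u @ mid) @ drop (Suc j) u)"
    using raag_step.cancel[of E "take i u @ mid" "u!i" "drop (Suc j) u"] ij(3) by simp
  show ?thesis using 1 2 a raag_step_eq raag_eq_trans by fastforce
qed


lemma RstI: "i < j \<Longrightarrow> j < length u \<Longrightarrow> u!j = inv_letter (u!i) \<Longrightarrow>
   (\<And>k. i < k \<Longrightarrow> k < j \<Longrightarrow> E (fst (u!i)) (fst (u!k))) \<Longrightarrow> Rst E u (del2 i j u)"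
  unfolding Rst_def by blast

lemma fst_inv[simp]: "fst (inv_letter x) = fst x" by (simp add: inv_letter_def)
lemma inv_inv[simp]: "inv_letter (inv_letter x) = x" by (simp add: inv_letter_def)

context
  fixes E :: "nat \<Rightarrow> nat \<Rightarrow> bool"
  assumes symE: "\<And>a b. E a b \<Longrightarrow> E b a" and irrE: "\<And>a. \<not> E a a"
begin

end

lemma tau_id[simp]: "m \<noteq> k \<Longrightarrow> m \<noteq> Suc k \<Longrightarrow> tau k m = m" by (simp add: tau_def)
lemma tau_k[simp]: "tau k k = Suc k" "tau k (Suc k) = k" by (simp_all add: tau_def)
lemma tau_lt: "m < L \<Longrightarrow> Suc k < L \<Longrightarrow> tau k m < L" by (simp add: tau_def)
lemma idx_lt: "m < L - 2 \<Longrightarrow> i < j \<Longrightarrow> idx i j m < L" unfolding idx_def by auto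

lemma a1a: "i < j \<Longrightarrow> Suc k < i \<Longrightarrow> tau k (idx i j m) = idx i j (tau k m)"
  unfolding tau_def idx_def by simp
lemma a1b: "i < j \<Longrightarrow> j < Suc (Suc k) \<Longrightarrow>
  tau (Suc (Suc k)) (idx i j m) = idx i j (tau k m)"
  unfolding tau_def idx_def by simp
lemma a1c: "i \<le> k \<Longrightarrow> Suc (Suc k) < j \<Longrightarrow>
  tau (Suc k) (idx i j m) = idx i j (tau k m)"
  unfolding tau_def idx_def by simp
lemma a2: "i < j \<Longrightarrow> k = i \<Longrightarrow> Suc k \<noteq> j \<Longrightarrow> tau k (idx (Suc i) j m) = idx i j m"
  unfolding tau_def idx_def by simp
lemma a3: "i < j \<Longrightarrow> Suc k = j \<Longrightarrow> k \<noteq> i \<Longrightarrow> tau k (idx i k m) = idx i j m"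
  unfolding tau_def idx_def by simp
lemma a4: "i < j \<Longrightarrow> Suc k = i \<Longrightarrow> tau k (idx k j m) = idx i j m"
  unfolding tau_def idx_def by simp
lemma a5: "i < j \<Longrightarrow> k = j \<Longrightarrow> tau k (idx i (Suc j) m) = idx i j m"
  unfolding tau_def idx_def by simp

lemma dis_gen:
  assumes "Suc k < length u" "v = swp k u" "i < j" "j < length u"
    "\<And>m. tau k (idx i j m) = idx i j (tau k' m)" "Suc k' < length u - 2"
    "E (fst (u ! idx i j k')) (fst (u ! idx i j (Suc k')))"
  shows "Cst E (del2 i j u) (del2 i j v)"
  unfolding Cst_def
proof (intro exI conjI)
  show "Suc k' < length (del2 i j u)" using assms by simp
  show "E (fst (del2 i j u ! k')) (fst (del2 i j u ! Suc k'))" using assms by simp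
  show "del2 i j v = swp k' (del2 i j u)"
  proof (rule nth_equalityI)
    show "length (del2 i j v) = length (swp k' (del2 i j u))" using assms by simp
    fix m assume m: "m < length (del2 i j v)"
    then have m': "m < length u - 2" using assms by simp
    have "del2 i j v ! m = u ! tau k (idx i j m)" using m' assms idx_lt[OF m'] by simp
    moreover have "swp k' (del2 i j u) ! m = u ! idx i j (tau k' m)"
      using m' assms tau_lt[OF m'] by simp
    ultimately show "del2 i j v ! m = swp k' (del2 i j u) ! m" using assms by simp
  qed
qed

lemma del2_eq:
  assumes "length v = length u" "\<And>m. m < length u - 2 \<Longrightarrow> v ! idx i' j' m = u ! idx i j m"
  shows "del2 i' j' v = del2 i j u"
  using assms by (intro nth_equalityI) simp_all

context
  fixes E :: "nat \<Rightarrow> nat \<Rightarrow> bool"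
  assumes symE: "\<And>a b. E a b \<Longrightarrow> E b a" and irrE: "\<And>a. \<not> E a a"
begin

end

lemma del2_swap_eq:
  assumes "v = swp k u" "i' < j'" "\<And>m. tau k (idx i' j' m) = idx i j m"
  shows "del2 i' j' v = del2 i j u"
proof (rule del2_eq)
  show "length v = length u" using assms by simp
  fix m assume m: "m < length u - 2"
  have "idx i' j' m < length u" using idx_lt[OF m assms(2)] .
  then show "v ! idx i' j' m = u ! idx i j m" using assms by simp
qed

context
  fixes E :: "nat \<Rightarrow> nat \<Rightarrow> bool"
  assumes symE: "\<And>a b. E a b \<Longrightarrow> E b a" and irrE: "\<And>a. \<not> E a a"
begin

lemma coh1:
  assumes C: "Cst E u v" and R: "Rst E u a"
  shows "\<exists>b. Rst E v b \<and> (b = a \<or> Cst E a b)"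
proof -
  obtain k where k: "Suc k < length u" "E (fst (u!k)) (fst (u!Suc k))" "v = swp k u"
    using C unfolding Cst_def by blast
  obtain i j where ij0: "i < j" "j < length u" "u!j = inv_letter (u!i)"
    "\<forall>t. i < t \<and> t < j \<longrightarrow> E (fst (u!i)) (fst (u!t))" and a: "a = del2 i j u"
    using R unfolding Rst_def by blast
  have ij: "i < j" "j < length u" "u!j = inv_letter (u!i)"
    "\<And>t. i < t \<Longrightarrow> t < j \<Longrightarrow> E (fst (u!i)) (fst (u!t))" using ij0 by auto
  have vn: "\<And>m. m < length u \<Longrightarrow> v ! m = u ! tau k m" using k by simp
  have lv: "length v = length u" using k by simp
  have dis: "\<exists>b. Rst E v b \<and> (b = a \<or> Cst E a b)" if c: "Suc k < i \<or> j < k \<or> (i < k \<and> Suc k < j)"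
  proof -
    have R': "Rst E v (del2 i j v)"
    proof (rule RstI)
      have ne: "i \<noteq> k" "i \<noteq> Suc k" "j \<noteq> k" "j \<noteq> Suc k" using c ij(1) by auto
      show "i < j" by fact
      show "j < length v" using ij k by simp
      show "v ! j = inv_letter (v ! i)" using ij k ne by simp
      fix t assume t: "i < t" "t < j"
      have "i < tau k t \<and> tau k t < j" using t c unfolding tau_def by auto
      then show "E (fst (v ! i)) (fst (v ! t))" using ij k ne t by simp
    qed
    have "Cst E a (del2 i j v)"
    proof -
      consider "Suc k < i" | "j < k" | "i < k \<and> Suc k < j" using c by blast
      then show ?thesis
      proof cases
        case 1
        show ?thesis unfolding a
        proof (rule dis_gen[where k'=k])
          show "Suc k < length u" by fact
          show "v = swp k u" by fact
          show "i < j" by fact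
          show "j < length u" by fact
          show "\<And>m. tau k (idx i j m) = idx i j (tau k m)" using a1a ij(1) 1 by blast
          show "Suc k < length u - 2" using 1 ij(1,2) by linarith
          have "idx i j k = k" "idx i j (Suc k) = Suc k" using 1 unfolding idx_def by auto
          then show "E (fst (u ! idx i j k)) (fst (u ! idx i j (Suc k)))" using k(2) by simp
        qed
      next
        case 2
        have k0: "k = Suc (Suc (k - 2))" using 2 ij(1) by arith
        define k0 where "k0 = k - 2"
        note k0 = k0[folded k0_def]
        show ?thesis unfolding a
        proof (rule dis_gen[where k'=k0])
          show "Suc k < length u" by fact
          show "v = swp k u" by fact
          show "i < j" by fact
          show "j < length u" by fact
          show "\<And>m. tau k (idx i j m) = idx i j (tau k0 m)" using a1b[of i j k0] ij(1) 2 k0 by simp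
          show "Suc k0 < length u - 2" using k0 k(1) by linarith
          have "idx i j k0 = k" "idx i j (Suc k0) = Suc k" using 2 k0 ij(1) unfolding idx_def by auto
          then show "E (fst (u ! idx i j k0)) (fst (u ! idx i j (Suc k0)))" using k(2) by simp
        qed
      next
        case 3
        have k0: "k = Suc (k - 1)" using 3 by arith
        define k0 where "k0 = k - 1"
        note k0 = k0[folded k0_def]
        show ?thesis unfolding a
        proof (rule dis_gen[where k'=k0])
          show "Suc k < length u" by fact
          show "v = swp k u" by fact
          show "i < j" by fact
          show "j < length u" by fact
          show "\<And>m. tau k (idx i j m) = idx i j (tau k0 m)" using a1c[of i k0 j] 3 k0 by simp
          show "Suc k0 < length u - 2" using k0 3 ij(2) by linarith
          have "idx i j k0 = k" "idx i j (Suc k0) = Suc k" using 3 k0 unfolding idx_def by auto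
          then show "E (fst (u ! idx i j k0)) (fst (u ! idx i j (Suc k0)))" using k(2) by simp
        qed
      qed
    qed
    then show ?thesis using R' by metis
  qed
  consider "Suc k < i \<or> j < k \<or> (i < k \<and> Suc k < j)" | "k = i" | "Suc k = j" | "Suc k = i" | "k = j"
    by linarith
  then show ?thesis
  proof cases
    case 1
    then show ?thesis by (rule dis)
  next
    case 2
    have ne: "Suc k \<noteq> j"
    proof
      assume "Suc k = j"
      then have "E (fst (u!i)) (fst (u!i))" using k(2) ij(3) 2 by simp
      then show False using irrE by blast
    qed
    have R': "Rst E v (del2 (Suc i) j v)"
    proof (rule RstI)
      show "Suc i < j" using ij(1) ne 2 by simp
      show "j < length v" using ij(2) lv by simp
      have "v ! j = u ! j" "v ! Suc i = u ! i" using ij(1,2) k(1) ne 2 vn[of j] vn[of "Suc i"] by simp_all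
      then show "v ! j = inv_letter (v ! Suc i)" using ij(3) by simp
      fix t assume t: "Suc i < t" "t < j"
      then have "v ! t = u ! t" using ij(2) 2 vn by simp
      then show "E (fst (v ! Suc i)) (fst (v ! t))" using ij(4) t \<open>v ! Suc i = u ! i\<close> by simp
    qed
    have "del2 (Suc i) j v = a" unfolding a
      by (rule del2_swap_eq[OF k(3)]) (use ij(1) ne 2 a2 in auto)
    then show ?thesis using R' by metis
  next
    case 3
    have ne: "k \<noteq> i"
    proof
      assume "k = i"
      then have "E (fst (u!i)) (fst (u!i))" using k(2) ij(3) 3 by simp
      then show False using irrE by blast
    qed
    have R': "Rst E v (del2 i k v)"
    proof (rule RstI)
      show "i < k" using ij(1) ne 3 by simp
      show "k < length v" using ij(2) lv 3 by simp
      have "v ! k = u ! j" "v ! i = u ! i" using ij(1,2) k(1) ne 3 vn[of k] vn[of i] by simp_all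
      then show "v ! k = inv_letter (v ! i)" using ij(3) by simp
      fix t assume t: "i < t" "t < k"
      then have "v ! t = u ! t" using ij(2) 3 vn by simp
      then show "E (fst (v ! i)) (fst (v ! t))" using ij(4) t 3 \<open>v ! i = u ! i\<close> by simp
    qed
    have "del2 i k v = a" unfolding a
      by (rule del2_swap_eq[OF k(3)]) (use ij(1) ne 3 a3 in auto)
    then show ?thesis using R' by metis
  next
    case 4
    have R': "Rst E v (del2 k j v)"
    proof (rule RstI)
      show "k < j" using ij(1) 4 by simp
      show "j < length v" using ij(2) lv by simp
      have "v ! j = u ! j" "v ! k = u ! i" using ij(1,2) k(1) 4 vn[of j] vn[of k] by simp_all
      then show "v ! j = inv_letter (v ! k)" using ij(3) by simp
      fix t assume t: "k < t" "t < j"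
      show "E (fst (v ! k)) (fst (v ! t))"
      proof (cases "t = Suc k")
        case True
        then have "v ! t = u ! k" using vn k(1) by simp
        then show ?thesis using k(2) symE \<open>v ! k = u ! i\<close> 4 by simp
      next
        case False
        then have "v ! t = u ! t" using vn t ij(2) by simp
        then show ?thesis using ij(4) t 4 False \<open>v ! k = u ! i\<close> by simp
      qed
    qed
    have "del2 k j v = a" unfolding a
      by (rule del2_swap_eq[OF k(3)]) (use ij(1) 4 a4 in auto)
    then show ?thesis using R' by metis
  next
    case 5
    have R': "Rst E v (del2 i (Suc j) v)"
    proof (rule RstI)
      show "i < Suc j" using ij(1) by simp
      show "Suc j < length v" using k(1) lv 5 by simp
      have "v ! Suc j = u ! j" "v ! i = u ! i" using ij(1,2) k(1) 5 vn[of "Suc j"] vn[of i] by simp_all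
      then show "v ! Suc j = inv_letter (v ! i)" using ij(3) by simp
      fix t assume t: "i < t" "t < Suc j"
      show "E (fst (v ! i)) (fst (v ! t))"
      proof (cases "t = j")
        case True
        then have "v ! t = u ! Suc j" using vn k(1) 5 by simp
        moreover have "E (fst (u!i)) (fst (u ! Suc j))" using k(2) 5 ij(3) by simp
        ultimately show ?thesis using \<open>v ! i = u ! i\<close> by simp
      next
        case False
        then have "v ! t = u ! t" using vn t ij(2) 5 by simp
        then show ?thesis using ij(4) t 5 False \<open>v ! i = u ! i\<close> by simp
      qed
    qed
    have "del2 i (Suc j) v = a" unfolding a
      by (rule del2_swap_eq[OF k(3)]) (use ij(1) 5 a5 in auto)
    then show ?thesis using R' by metis
  qed
qed
end

lemma Cst_app: "E (fst y) (fst x) \<Longrightarrow> Cst E (A @ [y,x] @ D) (A @ [x,y] @ D)"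
  unfolding Cst_def
proof (intro exI conjI)
  assume e: "E (fst y) (fst x)"
  let ?k = "length A"
  show "Suc ?k < length (A @ [y, x] @ D)" by simp
  show "E (fst ((A @ [y, x] @ D) ! ?k)) (fst ((A @ [y, x] @ D) ! Suc ?k))" using e by (simp add: nth_append)
  show "A @ [x, y] @ D = swp ?k (A @ [y, x] @ D)"
  proof (rule nth_equalityI)
    show "length (A @ [x, y] @ D) = length (swp ?k (A @ [y, x] @ D))" by simp
    fix m assume m: "m < length (A @ [x, y] @ D)"
    consider "m < ?k" | "m = ?k" | "m = Suc ?k" | "Suc ?k < m" by linarith
    then show "(A @ [x, y] @ D) ! m = swp ?k (A @ [y, x] @ D) ! m"
      by cases (use m in \<open>simp_all add: nth_append tau_def\<close>)
  qed
qed

lemma move: "(\<forall>y\<in>set B. E (fst y) (fst x)) \<Longrightarrow> (Cst E)\<^sup>*\<^sup>* (A @ B @ [x] @ C) (A @ [x] @ B @ C)"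
proof (induction B arbitrary: A)
  case Nil
  then show ?case by simp
next
  case (Cons y B)
  have 1: "(Cst E)\<^sup>*\<^sup>* (A @ (y # B) @ [x] @ C) (A @ [y, x] @ B @ C)"
    using Cons.IH[of "A @ [y]"] Cons.prems by simp
  have 2: "Cst E (A @ [y, x] @ B @ C) (A @ [x, y] @ B @ C)"
    using Cons.prems Cst_app by simp
  have "(Cst E)\<^sup>*\<^sup>* (A @ (y # B) @ [x] @ C) (A @ [x, y] @ B @ C)"
    using 1 2 by (rule rtranclp.rtrancl_into_rtrancl)
  then show ?case by simp
qed

lemma Cst_sym:
  assumes symE: "\<And>a b. E a b \<Longrightarrow> E b a" and C: "Cst E u v" shows "Cst E v u"
proof -
  obtain k where k: "Suc k < length u" "E (fst (u!k)) (fst (u!Suc k))" "v = swp k u"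
    using C unfolding Cst_def by blast
  show ?thesis unfolding Cst_def
  proof (intro exI conjI)
    show "Suc k < length v" using k by simp
    show "E (fst (v ! k)) (fst (v ! Suc k))" using k symE by simp
    show "u = swp k v"
      by (rule nth_equalityI) (use k in \<open>auto simp: tau_def\<close>)
  qed
qed

lemma Cst_rtr_sym:
  assumes symE: "\<And>a b. E a b \<Longrightarrow> E b a" and C: "(Cst E)\<^sup>*\<^sup>* u v" shows "(Cst E)\<^sup>*\<^sup>* v u"
  using C
proof (induction rule: rtranclp_induct)
  case base then show ?case by simp
next
  case (step y z)
  then show ?case using Cst_sym[OF symE] by (meson converse_rtranclp_into_rtranclp)
qed

lemma take_split: "i < j \<Longrightarrow> j \<le> length u \<Longrightarrow>
  take j u = take i u @ u!i # take (j - Suc i) (drop (Suc i) u)"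
proof -
  assume a: "i < j" "j \<le> length u"
  have "take j u = take (i + (j - i)) u" using a by simp
  also have "\<dots> = take i u @ take (j - i) (drop i u)" by (rule take_add)
  also have "drop i u = u!i # drop (Suc i) u" using a by (simp add: Cons_nth_drop_Suc)
  also have "j - i = Suc (j - Suc i)" using a by simp
  finally show ?thesis by simp
qed

lemma drop_split: "j < j' \<Longrightarrow> j' < length u \<Longrightarrow>
  drop (Suc j) u = take (j' - Suc j) (drop (Suc j) u) @ u!j' # drop (Suc j') u"
proof -
  assume a: "j < j'" "j' < length u"
  have "drop (j' - Suc j) (drop (Suc j) u) = drop j' u" using a by simp
  also have "\<dots> = u!j' # drop (Suc j') u" using a by (simp add: Cons_nth_drop_Suc)
  finally show ?thesis by (metis append_take_drop_id)
qed

lemma del2_dec: "i < j \<Longrightarrow> j < length u \<Longrightarrow>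
  del2 i j u = take i u @ take (j - Suc i) (drop (Suc i) u) @ drop (Suc j) u"
  by (auto simp: nth_append min_def idx_def intro!: nth_equalityI)

lemma set_slice: "y \<in> set (take n (drop m u)) \<Longrightarrow> \<exists>t. m \<le> t \<and> t < m + n \<and> t < length u \<and> y = u!t"
proof -
  assume "y \<in> set (take n (drop m u))"
  then obtain t where t: "t < length (take n (drop m u))" "y = take n (drop m u) ! t"
    by (auto simp: in_set_conv_nth)
  then have "t < n" "m + t < length u" "y = u ! (m + t)" by auto
  then show ?thesis by (intro exI[of _ "m + t"]) auto
qed

lemma del2_comp:
  assumes "p < q" "i < j" "r < s" "i' < j'"
    "\<And>m. idx i j (idx p q m) = idx i' j' (idx r s m)"
  shows "del2 p q (del2 i j u) = del2 r s (del2 i' j' u)"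
proof (rule nth_equalityI)
  show "length (del2 p q (del2 i j u)) = length (del2 r s (del2 i' j' u))" by simp
  fix m assume "m < length (del2 p q (del2 i j u))"
  then have m: "m < length u - 2 - 2" by simp
  have 1: "idx p q m < length u - 2" using idx_lt[OF m assms(1)] .
  have 2: "idx r s m < length u - 2" using idx_lt[OF m assms(3)] .
  show "del2 p q (del2 i j u) ! m = del2 r s (del2 i' j' u) ! m"
    using m 1 2 assms(5) by simp
qed

lemma Rst_shift:
  assumes "i < j" "p < q" "q < length u - 2" "i' < j'" "j' < length u"
    "u!j' = inv_letter (u!i')" "\<And>t. i' < t \<Longrightarrow> t < j' \<Longrightarrow> E (fst (u!i')) (fst (u!t))"
    "idx i j p = i'" "idx i j q = j'" "\<And>t. p < t \<Longrightarrow> t < q \<Longrightarrow> i' < idx i j t \<and> idx i j t < j'"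
  shows "Rst E (del2 i j u) (del2 p q (del2 i j u))"
proof (rule RstI)
  show "p < q" by fact
  show "q < length (del2 i j u)" using assms by simp
  show "del2 i j u ! q = inv_letter (del2 i j u ! p)" using assms by simp
  fix t assume t: "p < t" "t < q"
  then show "E (fst (del2 i j u ! p)) (fst (del2 i j u ! t))" using assms by simp
qed


lemma ar_g: "i < j \<Longrightarrow> j < Suc (Suc p) \<Longrightarrow> p < q \<Longrightarrow>
  idx i j (idx p q m) = idx (Suc (Suc p)) (Suc (Suc q)) (idx i j m)"
  unfolding idx_def by simp
lemma ar_d: "i \<le> p \<Longrightarrow> p < s \<Longrightarrow> s \<le> q \<Longrightarrow>
  idx i (Suc s) (idx p q m) = idx (Suc p) (Suc (Suc q)) (idx i s m)"
  unfolding idx_def by simp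
lemma ar_e: "i \<le> p \<Longrightarrow> p < q \<Longrightarrow> q \<le> s \<Longrightarrow>
  idx i (Suc (Suc s)) (idx p q m) = idx (Suc p) (Suc q) (idx i s m)"
  unfolding idx_def by simp


context
  fixes E :: "nat \<Rightarrow> nat \<Rightarrow> bool"
  assumes symE: "\<And>a b. E a b \<Longrightarrow> E b a" and irrE: "\<And>a. \<not> E a a"
begin

lemma lc_lt:
  assumes ij: "i < j" "j < length u" "u!j = inv_letter (u!i)"
      "\<And>t. i < t \<Longrightarrow> t < j \<Longrightarrow> E (fst (u!i)) (fst (u!t))"
  and ij': "i' < j'" "j' < length u" "u!j' = inv_letter (u!i')"
      "\<And>t. i' < t \<Longrightarrow> t < j' \<Longrightarrow> E (fst (u!i')) (fst (u!t))"
  and lt: "i < i'"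
  shows "\<exists>c d. (Rst E)\<^sup>*\<^sup>* (del2 i j u) c \<and> (Rst E)\<^sup>*\<^sup>* (del2 i' j' u) d \<and> (Cst E)\<^sup>*\<^sup>* c d"
proof -
  consider "i' = j" | "j < i'" | "i' < j \<and> j < j'" | "i' < j \<and> j' < j" | "i' < j \<and> j' = j"
    by linarith
  then show ?thesis
  proof cases
    case 1
    define P where "P = take i u"
    define S1 where "S1 = take (j - Suc i) (drop (Suc i) u)"
    define S2 where "S2 = take (j' - Suc j) (drop (Suc j) u)"
    define T where "T = drop (Suc j') u"
    have xj: "u!j' = u!i" using ij(3) ij'(3) 1 by simp
    have a: "del2 i j u = P @ (S1 @ S2) @ [u!i] @ T"
      using del2_dec[OF ij(1,2)] drop_split[of j j' u] ij'(1,2) 1 xj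
      unfolding P_def S1_def S2_def T_def by simp
    have b: "del2 i' j' u = P @ [u!i] @ (S1 @ S2) @ T"
      using del2_dec[OF ij'(1,2)] take_split[of i j u] ij(1,2) 1
      unfolding P_def S1_def S2_def T_def by simp
    have com: "\<forall>y\<in>set (S1 @ S2). E (fst y) (fst (u!i))"
    proof
      fix y assume "y \<in> set (S1 @ S2)"
      then consider "y \<in> set S1" | "y \<in> set S2" by auto
      then show "E (fst y) (fst (u!i))"
      proof cases
        case 1
        from set_slice[OF 1[unfolded S1_def]] obtain t where t: "Suc i \<le> t" "t < Suc i + (j - Suc i)" "y = u!t"
          by blast
        then have "E (fst (u!i)) (fst y)" using ij(4) ij(1) by simp
        then show ?thesis using symE by blast
      next
        case 2
        from set_slice[OF 2[unfolded S2_def]] obtain t where t: "Suc j \<le> t" "t < Suc j + (j' - Suc j)" "y = u!t"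
          by blast
        then have "E (fst (u!j)) (fst y)" using ij'(4) ij'(1) 1 by simp
        then show ?thesis using symE ij(3) by simp
      qed
    qed
    have "(Cst E)\<^sup>*\<^sup>* (del2 i j u) (del2 i' j' u)" unfolding a b by (rule move[of "S1 @ S2" E "u!i" P T, OF com])
    then show ?thesis by blast
  next
    case 2
    define p where "p = i' - 2"
    define q where "q = j' - 2"
    have pq: "i' = Suc (Suc p)" "j' = Suc (Suc q)" using 2 ij(1) ij'(1) unfolding p_def q_def by arith+
    have c: "Rst E (del2 i j u) (del2 p q (del2 i j u))"
    proof (rule Rst_shift[OF ij(1) _ _ ij'(1,2,3)])
      show "p < q" using pq ij'(1) by simp
      show "q < length u - 2" using pq ij'(2) by simp
      show "\<And>t. i' < t \<Longrightarrow> t < j' \<Longrightarrow> E (fst (u!i')) (fst (u!t))" by (rule ij'(4))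
      show "idx i j p = i'" "idx i j q = j'" using pq 2 ij(1) ij'(1) unfolding idx_def by auto
      show "\<And>t. p < t \<Longrightarrow> t < q \<Longrightarrow> i' < idx i j t \<and> idx i j t < j'"
        using pq 2 ij(1) unfolding idx_def by auto
    qed
    have d: "Rst E (del2 i' j' u) (del2 i j (del2 i' j' u))"
    proof (rule Rst_shift[OF ij'(1) _ _ ij(1,2,3)])
      show "i < j" by fact
      show "j < length u - 2" using pq ij'(1,2) 2 by linarith
      show "\<And>t. i < t \<Longrightarrow> t < j \<Longrightarrow> E (fst (u!i)) (fst (u!t))" by (rule ij(4))
      show "idx i' j' i = i" "idx i' j' j = j" using 2 ij(1) unfolding idx_def by auto
      show "\<And>t. i < t \<Longrightarrow> t < j \<Longrightarrow> i < idx i' j' t \<and> idx i' j' t < j"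
        using 2 unfolding idx_def by auto
    qed
    have eq: "del2 p q (del2 i j u) = del2 i j (del2 i' j' u)"
      by (rule del2_comp) (use pq ij(1) ij'(1) 2 ar_g in auto)
    show ?thesis using c d eq by (metis r_into_rtranclp rtranclp.rtrancl_refl)
  next
    case 3
    define p where "p = i' - 1"
    define q where "q = j' - 2"
    define s where "s = j - 1"
    have pq: "i' = Suc p" "j' = Suc (Suc q)" "j = Suc s" using 3 lt unfolding p_def q_def s_def by arith+
    have c: "Rst E (del2 i j u) (del2 p q (del2 i j u))"
    proof (rule Rst_shift[OF ij(1) _ _ ij'(1,2,3)])
      show "p < q" using pq 3 by simp
      show "q < length u - 2" using pq ij'(2) by simp
      show "\<And>t. i' < t \<Longrightarrow> t < j' \<Longrightarrow> E (fst (u!i')) (fst (u!t))" by (rule ij'(4))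
      show "idx i j p = i'" "idx i j q = j'" using pq 3 lt unfolding idx_def by auto
      show "\<And>t. p < t \<Longrightarrow> t < q \<Longrightarrow> i' < idx i j t \<and> idx i j t < j'"
        using pq 3 lt unfolding idx_def by auto
    qed
    have d: "Rst E (del2 i' j' u) (del2 i s (del2 i' j' u))"
    proof (rule Rst_shift[OF ij'(1) _ _ ij(1,2,3)])
      show "i < s" using pq 3 lt by simp
      show "s < length u - 2" using pq ij'(2) 3 by linarith
      show "\<And>t. i < t \<Longrightarrow> t < j \<Longrightarrow> E (fst (u!i)) (fst (u!t))" by (rule ij(4))
      show "idx i' j' i = i" "idx i' j' s = j" using pq 3 lt unfolding idx_def by auto
      show "\<And>t. i < t \<Longrightarrow> t < s \<Longrightarrow> i < idx i' j' t \<and> idx i' j' t < j"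
        using pq 3 unfolding idx_def by auto
    qed
    have eq: "del2 p q (del2 i j u) = del2 i s (del2 i' j' u)"
      by (rule del2_comp) (use pq ij(1) ij'(1) 3 lt ar_d in auto)
    show ?thesis using c d eq by (metis r_into_rtranclp rtranclp.rtrancl_refl)
  next
    case 4
    define p where "p = i' - 1"
    define q where "q = j' - 1"
    define s where "s = j - 2"
    have pq: "i' = Suc p" "j' = Suc q" "j = Suc (Suc s)" using 4 lt ij'(1) unfolding p_def q_def s_def by arith+
    have c: "Rst E (del2 i j u) (del2 p q (del2 i j u))"
    proof (rule Rst_shift[OF ij(1) _ _ ij'(1,2,3)])
      show "p < q" using pq ij'(1) by simp
      show "q < length u - 2" using pq ij(2) 4 by linarith
      show "\<And>t. i' < t \<Longrightarrow> t < j' \<Longrightarrow> E (fst (u!i')) (fst (u!t))" by (rule ij'(4))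
      show "idx i j p = i'" "idx i j q = j'" using pq 4 lt ij'(1) unfolding idx_def by auto
      show "\<And>t. p < t \<Longrightarrow> t < q \<Longrightarrow> i' < idx i j t \<and> idx i j t < j'"
        using pq 4 lt ij'(1) unfolding idx_def by auto
    qed
    have d: "Rst E (del2 i' j' u) (del2 i s (del2 i' j' u))"
    proof (rule Rst_shift[OF ij'(1) _ _ ij(1,2,3)])
      show "i < s" using pq 4 lt ij'(1) by simp
      show "s < length u - 2" using pq ij(2) by simp
      show "\<And>t. i < t \<Longrightarrow> t < j \<Longrightarrow> E (fst (u!i)) (fst (u!t))" by (rule ij(4))
      show "idx i' j' i = i" "idx i' j' s = j" using pq 4 lt ij'(1) unfolding idx_def by auto
      show "\<And>t. i < t \<Longrightarrow> t < s \<Longrightarrow> i < idx i' j' t \<and> idx i' j' t < j"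
        using pq 4 lt ij'(1) unfolding idx_def by auto
    qed
    have eq: "del2 p q (del2 i j u) = del2 i s (del2 i' j' u)"
      by (rule del2_comp) (use pq ij(1) ij'(1) 4 lt ar_e in auto)
    show ?thesis using c d eq by (metis r_into_rtranclp rtranclp.rtrancl_refl)
  next
    case 5
    have "E (fst (u!i)) (fst (u!i'))" using ij(4) lt 5 by simp
    moreover have "fst (u!i') = fst (u!i)" using ij(3) ij'(3) 5
      by (metis fst_inv)
    ultimately show ?thesis using irrE by simp
  qed
qed

end

context
  fixes E :: "nat \<Rightarrow> nat \<Rightarrow> bool"
  assumes symE: "\<And>a b. E a b \<Longrightarrow> E b a" and irrE: "\<And>a. \<not> E a a"
begin

lemma lc:
  assumes Ra: "Rst E u a" and Rb: "Rst E u b"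
  shows "\<exists>c d. (Rst E)\<^sup>*\<^sup>* a c \<and> (Rst E)\<^sup>*\<^sup>* b d \<and> (Cst E)\<^sup>*\<^sup>* c d"
proof -
  obtain i j where ij0: "i < j" "j < length u" "u!j = inv_letter (u!i)"
    "\<forall>t. i < t \<and> t < j \<longrightarrow> E (fst (u!i)) (fst (u!t))" and a: "a = del2 i j u"
    using Ra unfolding Rst_def by blast
  have ij: "i < j" "j < length u" "u!j = inv_letter (u!i)"
    "\<And>t. i < t \<Longrightarrow> t < j \<Longrightarrow> E (fst (u!i)) (fst (u!t))" using ij0 by auto
  obtain i' j' where ij1: "i' < j'" "j' < length u" "u!j' = inv_letter (u!i')"
    "\<forall>t. i' < t \<and> t < j' \<longrightarrow> E (fst (u!i')) (fst (u!t))" and b: "b = del2 i' j' u"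
    using Rb unfolding Rst_def by blast
  have ij': "i' < j'" "j' < length u" "u!j' = inv_letter (u!i')"
    "\<And>t. i' < t \<Longrightarrow> t < j' \<Longrightarrow> E (fst (u!i')) (fst (u!t))" using ij1 by auto
  consider "i < i'" | "i' < i" | "i = i'" by linarith
  then show ?thesis
  proof cases
    case 1
    show ?thesis unfolding a b by (rule lc_lt[where E=E, OF symE irrE ij ij' 1])
  next
    case 2
    obtain c d where "(Rst E)\<^sup>*\<^sup>* b c" "(Rst E)\<^sup>*\<^sup>* a d" "(Cst E)\<^sup>*\<^sup>* c d"
      using lc_lt[where E=E, OF symE irrE ij' ij 2] unfolding a b by blast
    then show ?thesis using Cst_rtr_sym[where E=E, OF symE] by blast
  next
    case 3
    have "j = j'"
    proof (rule ccontr)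
      assume "j \<noteq> j'"
      then consider "j < j'" | "j' < j" by linarith
      then show False
      proof cases
        case 1
        then have "E (fst (u!i)) (fst (u!j))" using ij'(4) ij(1) 3 by simp
        then show False using ij(3) irrE by simp
      next
        case 2
        then have "E (fst (u!i')) (fst (u!j'))" using ij(4) ij'(1) 3 by simp
        then show False using ij'(3) irrE by simp
      qed
    qed
    then have "a = b" using a b 3 by simp
    then show ?thesis by blast
  qed
qed

lemma coh_a: "(Cst E)\<^sup>*\<^sup>* u v \<Longrightarrow> Rst E u a \<Longrightarrow> \<exists>b. Rst E v b \<and> (Cst E)\<^sup>*\<^sup>* a b"
proof (induction rule: rtranclp_induct)
  case base
  then show ?case by blast
next
  case (step w v)
  then obtain b1 where b1: "Rst E w b1" "(Cst E)\<^sup>*\<^sup>* a b1" by blast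
  obtain b where b: "Rst E v b" "b = b1 \<or> Cst E b1 b" using coh1[where E=E, OF symE irrE step(2) b1(1)] by blast
  have "(Cst E)\<^sup>*\<^sup>* a b" using b(2) b1(2) by (metis rtranclp.rtrancl_into_rtrancl)
  then show ?case using b(1) by blast
qed

lemma coh_rtr: "(Rst E)\<^sup>*\<^sup>* u a \<Longrightarrow> (Cst E)\<^sup>*\<^sup>* u v \<Longrightarrow> \<exists>b. (Rst E)\<^sup>*\<^sup>* v b \<and> (Cst E)\<^sup>*\<^sup>* a b"
proof (induction arbitrary: v rule: converse_rtranclp_induct)
  case base
  then show ?case by blast
next
  case (step u u1)
  obtain b1 where b1: "Rst E v b1" "(Cst E)\<^sup>*\<^sup>* u1 b1" using coh_a[OF step.prems step.hyps(1)] by blast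
  obtain b where b: "(Rst E)\<^sup>*\<^sup>* b1 b" "(Cst E)\<^sup>*\<^sup>* a b" using step.IH[OF b1(2)] by blast
  have "(Rst E)\<^sup>*\<^sup>* v b" using b1(1) b(1) by (rule converse_rtranclp_into_rtranclp)
  then show ?case using b(2) by blast
qed

lemma Cst_len: "(Cst E)\<^sup>*\<^sup>* u v \<Longrightarrow> length v = length u"
  by (induction rule: rtranclp_induct) (auto simp: Cst_def)

lemma Rst_rtr_len: "(Rst E)\<^sup>*\<^sup>* u v \<Longrightarrow> length v \<le> length u"
  by (induction rule: rtranclp_induct) (auto dest: Rst_len)

lemma conf: "(Rst E)\<^sup>*\<^sup>* u a \<Longrightarrow> (Rst E)\<^sup>*\<^sup>* u b \<Longrightarrow>
  \<exists>c d. (Rst E)\<^sup>*\<^sup>* a c \<and> (Rst E)\<^sup>*\<^sup>* b d \<and> (Cst E)\<^sup>*\<^sup>* c d"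
proof (induction "length u" arbitrary: u a b rule: less_induct)
  case less
  show ?case
  proof (cases "a = u")
    case True
    then show ?thesis using less.prems(2) by blast
  next
    case False
    then obtain a1 where a1: "Rst E u a1" "(Rst E)\<^sup>*\<^sup>* a1 a"
      using less.prems(1) by (metis converse_rtranclpE)
    show ?thesis
    proof (cases "b = u")
      case True
      then show ?thesis using less.prems(1) by blast
    next
      case False
      then obtain b1 where b1: "Rst E u b1" "(Rst E)\<^sup>*\<^sup>* b1 b"
        using less.prems(2) by (metis converse_rtranclpE)
      obtain c d where cd: "(Rst E)\<^sup>*\<^sup>* a1 c" "(Rst E)\<^sup>*\<^sup>* b1 d" "(Cst E)\<^sup>*\<^sup>* c d"
        using lc[OF a1(1) b1(1)] by blast
      have la1: "length a1 < length u" using Rst_len[OF a1(1)] by simp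
      have lb1: "length b1 < length u" using Rst_len[OF b1(1)] by simp
      obtain a' c' where ac: "(Rst E)\<^sup>*\<^sup>* a a'" "(Rst E)\<^sup>*\<^sup>* c c'" "(Cst E)\<^sup>*\<^sup>* a' c'"
        using less.hyps[OF la1 a1(2) cd(1)] by blast
      obtain b' d' where bd: "(Rst E)\<^sup>*\<^sup>* b b'" "(Rst E)\<^sup>*\<^sup>* d d'" "(Cst E)\<^sup>*\<^sup>* b' d'"
        using less.hyps[OF lb1 b1(2) cd(2)] by blast
      obtain c'' where c'': "(Rst E)\<^sup>*\<^sup>* d c''" "(Cst E)\<^sup>*\<^sup>* c' c''"
        using coh_rtr[OF ac(2) cd(3)] by blast
      have ld: "length d < length u" using Rst_rtr_len[OF cd(2)] lb1 by simp
      obtain e1 e2 where e: "(Rst E)\<^sup>*\<^sup>* c'' e1" "(Rst E)\<^sup>*\<^sup>* d' e2" "(Cst E)\<^sup>*\<^sup>* e1 e2"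
        using less.hyps[OF ld c''(1) bd(2)] by blast
      have "(Cst E)\<^sup>*\<^sup>* c'' a'" using Cst_rtr_sym[where E=E, OF symE] ac(3) c''(2) by (meson rtranclp_trans)
      then obtain e1' where e1': "(Rst E)\<^sup>*\<^sup>* a' e1'" "(Cst E)\<^sup>*\<^sup>* e1 e1'"
        using coh_rtr[OF e(1)] by blast
      have "(Cst E)\<^sup>*\<^sup>* d' b'" using Cst_rtr_sym[where E=E, OF symE] bd(3) by blast
      then obtain e2' where e2': "(Rst E)\<^sup>*\<^sup>* b' e2'" "(Cst E)\<^sup>*\<^sup>* e2 e2'"
        using coh_rtr[OF e(2)] by blast
      have f1: "(Rst E)\<^sup>*\<^sup>* a e1'" using ac(1) e1'(1) by (rule rtranclp_trans)
      have f2: "(Rst E)\<^sup>*\<^sup>* b e2'" using bd(1) e2'(1) by (rule rtranclp_trans)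
      have "(Cst E)\<^sup>*\<^sup>* e1' e2'"
        using Cst_rtr_sym[where E=E, OF symE e1'(2)] e(3) e2'(2) by (meson rtranclp_trans)
      then show ?thesis using f1 f2 by blast
    qed
  qed
qed

definition J :: "letter list \<Rightarrow> letter list \<Rightarrow> bool" where
  "J u v \<longleftrightarrow> (\<exists>u' v'. (Rst E)\<^sup>*\<^sup>* u u' \<and> (Rst E)\<^sup>*\<^sup>* v v' \<and> (Cst E)\<^sup>*\<^sup>* u' v')"

lemma J_sym: "J u v \<Longrightarrow> J v u"
  unfolding J_def using Cst_rtr_sym[where E=E, OF symE] by blast

lemma J_trans: assumes "J u v" "J v w" shows "J u w"
proof -
  obtain u1 v1 where 1: "(Rst E)\<^sup>*\<^sup>* u u1" "(Rst E)\<^sup>*\<^sup>* v v1" "(Cst E)\<^sup>*\<^sup>* u1 v1"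
    using assms(1) unfolding J_def by blast
  obtain v2 w1 where 2: "(Rst E)\<^sup>*\<^sup>* v v2" "(Rst E)\<^sup>*\<^sup>* w w1" "(Cst E)\<^sup>*\<^sup>* v2 w1"
    using assms(2) unfolding J_def by blast
  obtain c1 c2 where c: "(Rst E)\<^sup>*\<^sup>* v1 c1" "(Rst E)\<^sup>*\<^sup>* v2 c2" "(Cst E)\<^sup>*\<^sup>* c1 c2"
    using conf[OF 1(2) 2(1)] by blast
  obtain e1 where e1: "(Rst E)\<^sup>*\<^sup>* u1 e1" "(Cst E)\<^sup>*\<^sup>* c1 e1"
    using coh_rtr[OF c(1) Cst_rtr_sym[where E=E, OF symE 1(3)]] by blast
  obtain e2 where e2: "(Rst E)\<^sup>*\<^sup>* w1 e2" "(Cst E)\<^sup>*\<^sup>* c2 e2"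
    using coh_rtr[OF c(2) 2(3)] by blast
  have "(Cst E)\<^sup>*\<^sup>* e1 e2"
    using Cst_rtr_sym[where E=E, OF symE e1(2)] c(3) e2(2) by (meson rtranclp_trans)
  moreover have "(Rst E)\<^sup>*\<^sup>* u e1" using 1(1) e1(1) by (rule rtranclp_trans)
  moreover have "(Rst E)\<^sup>*\<^sup>* w e2" using 2(2) e2(1) by (rule rtranclp_trans)
  ultimately show ?thesis unfolding J_def by blast
qed

lemma step_J: "raag_step E u v \<Longrightarrow> J u v"
proof (induction rule: raag_step.induct)
  case (cancel u x v)
  have "Rst E (u @ [x, inv_letter x] @ v) (del2 (length u) (Suc (length u)) (u @ [x, inv_letter x] @ v))"
    by (rule RstI) (auto simp: nth_append)
  moreover have "del2 (length u) (Suc (length u)) (u @ [x, inv_letter x] @ v) = u @ v"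
    by (subst del2_dec) auto
  ultimately show ?case unfolding J_def by (metis r_into_rtranclp rtranclp.rtrancl_refl)
next
  case (comm x y u v)
  have "Cst E (u @ [x, y] @ v) (u @ [y, x] @ v)" using Cst_app comm by blast
  then show ?case unfolding J_def by (metis r_into_rtranclp rtranclp.rtrancl_refl)
qed

lemma raag_J: "raag_eq E u v \<Longrightarrow> J u v"
  unfolding raag_eq_def
proof (induction rule: equivclp_induct)
  case base
  then show ?case unfolding J_def by blast
next
  case (step y z)
  then have "J y z" using step_J J_sym by blast
  then show ?case using step.IH J_trans by blast
qed

lemma geo_irr: assumes "length u = raag_norm E u" "(Rst E)\<^sup>*\<^sup>* u a" shows "a = u"
proof (rule ccontr)
  assume "a \<noteq> u"
  then obtain a1 where a1: "Rst E u a1" using assms(2) by (metis converse_rtranclpE)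
  have "raag_norm E u \<le> length a1" using raag_norm_le raag_eq_sym[OF Rst_raag[OF a1]] by blast
  then show False using Rst_len[OF a1] assms(1) by simp
qed

lemma geo_Cst: assumes "length u = raag_norm E u" "length v = raag_norm E v" "raag_eq E u v"
  shows "(Cst E)\<^sup>*\<^sup>* u v"
proof -
  obtain u' v' where "(Rst E)\<^sup>*\<^sup>* u u'" "(Rst E)\<^sup>*\<^sup>* v v'" "(Cst E)\<^sup>*\<^sup>* u' v'"
    using raag_J[OF assms(3)] unfolding J_def by blast
  then show ?thesis using geo_irr assms by metis
qed

end

definition rc :: "(nat \<Rightarrow> nat \<Rightarrow> bool) \<Rightarrow> letter \<Rightarrow> letter list \<Rightarrow> nat" where
  "rc E c d = (LEAST m. \<exists>x y. (\<forall>b \<in> set x. E (fst c) (fst b))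
       \<and> raag_eq E d (x @ [c] @ y) \<and> raag_norm E y = m)"

lemma rcount_rc: "rcount E ws i = rc E (ws!i) (drop i ws)"
  unfolding rcount_def rc_def by simp

lemma rc_cong: assumes "raag_eq E d d'" shows "rc E c d = rc E c d'"
proof -
  have "\<And>w. raag_eq E d w = raag_eq E d' w"
    using assms raag_eq_sym raag_eq_trans by metis
  then show ?thesis unfolding rc_def by simp
qed

lemma rc_comm: assumes e: "E (fst c) (fst c')" shows "rc E c (c' # d) = rc E c d"
proof -
  have "(\<exists>x y. (\<forall>b \<in> set x. E (fst c) (fst b)) \<and> raag_eq E (c' # d) (x @ [c] @ y) \<and> raag_norm E y = m)
     = (\<exists>x y. (\<forall>b \<in> set x. E (fst c) (fst b)) \<and> raag_eq E d (x @ [c] @ y) \<and> raag_norm E y = m)" for m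
  proof
    assume "\<exists>x y. (\<forall>b \<in> set x. E (fst c) (fst b)) \<and> raag_eq E (c' # d) (x @ [c] @ y) \<and> raag_norm E y = m"
    then obtain x y where xy: "\<forall>b \<in> set x. E (fst c) (fst b)" "raag_eq E (c' # d) (x @ [c] @ y)" "raag_norm E y = m"
      by blast
    have "raag_step E ([] @ [inv_letter c', inv_letter (inv_letter c')] @ d) ([] @ d)"
      by (rule raag_step.cancel)
    then have "raag_eq E d (inv_letter c' # c' # d)" using raag_step_eq raag_eq_sym by fastforce
    moreover have "raag_eq E (inv_letter c' # c' # d) (inv_letter c' # x @ [c] @ y)"
      using raag_eq_cons[OF xy(2)] .
    ultimately have "raag_eq E d ((inv_letter c' # x) @ [c] @ y)" using raag_eq_trans by fastforce
    moreover have "\<forall>b \<in> set (inv_letter c' # x). E (fst c) (fst b)" using xy(1) e by simp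
    ultimately show "\<exists>x y. (\<forall>b \<in> set x. E (fst c) (fst b)) \<and> raag_eq E d (x @ [c] @ y) \<and> raag_norm E y = m"
      using xy(3) by blast
  next
    assume "\<exists>x y. (\<forall>b \<in> set x. E (fst c) (fst b)) \<and> raag_eq E d (x @ [c] @ y) \<and> raag_norm E y = m"
    then obtain x y where xy: "\<forall>b \<in> set x. E (fst c) (fst b)" "raag_eq E d (x @ [c] @ y)" "raag_norm E y = m"
      by blast
    have "raag_eq E (c' # d) ((c' # x) @ [c] @ y)" using raag_eq_cons[OF xy(2)] by simp
    moreover have "\<forall>b \<in> set (c' # x). E (fst c) (fst b)" using xy(1) e by simp
    ultimately show "\<exists>x y. (\<forall>b \<in> set x. E (fst c) (fst b)) \<and> raag_eq E (c' # d) (x @ [c] @ y) \<and> raag_norm E y = m"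
      using xy(3) by blast
  qed
  then show ?thesis unfolding rc_def by simp
qed

lemma raag_norm_cong: "raag_eq E u v \<Longrightarrow> raag_norm E u = raag_norm E v"
proof -
  assume a: "raag_eq E u v"
  have "\<And>w. raag_eq E w u = raag_eq E w v" using a raag_eq_sym raag_eq_trans by metis
  then show ?thesis unfolding raag_norm_def by simp
qed

lemma set_gpow: "z \<in> set (gpow a N) \<Longrightarrow> fst z = a"
  unfolding gpow_def by auto

definition G :: "(nat \<Rightarrow> nat \<Rightarrow> bool) \<Rightarrow> nat \<Rightarrow> letter list \<Rightarrow> nat \<Rightarrow> letter list" where
  "G E M w i = gpow (fst (w!i)) (sig_exp E M w i)"

lemma sigma_G: "sigma E M w = concat (map (G E M w) [0..<length w])"
  unfolding sigma_def G_def by simp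

lemma upt_split3: "Suc k < n \<Longrightarrow> [0..<n] = [0..<k] @ [k, Suc k] @ [Suc (Suc k)..<n]"
proof -
  assume a: "Suc k < n"
  have "[0..<n] = [0..<k] @ [k..<n]" using a by (metis le0 less_imp_le_nat Suc_lessD upt_add_eq_append le_add_diff_inverse)
  also have "[k..<n] = k # Suc k # [Suc (Suc k)..<n]" using a by (simp add: upt_conv_Cons)
  finally show ?thesis by simp
qed

lemma drop_swp_lt: assumes "i < k" "Suc k < length u"
  shows "drop i (swp k u) = swp (k - i) (drop i u)"
  by (rule nth_equalityI) (use assms in \<open>auto simp: tau_def\<close>)

lemma drop_swp_gt: assumes "Suc k < i"
  shows "drop i (swp k u) = drop i u"
  by (rule nth_equalityI) (use assms in \<open>auto simp: tau_def\<close>)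

context
  fixes E :: "nat \<Rightarrow> nat \<Rightarrow> bool"
  assumes symE: "\<And>a b. E a b \<Longrightarrow> E b a" and irrE: "\<And>a. \<not> E a a"
begin

lemma rcount_swp:
  assumes k: "Suc k < length u" "E (fst (u!k)) (fst (u!Suc k))" and i: "i < length u"
  shows "rcount E (swp k u) i = rcount E u (tau k i)"
proof -
  let ?v = "swp k u"
  have lv: "length ?v = length u" by simp
  have dk: "\<And>w. Suc k < length w \<Longrightarrow> drop k w = w!k # w!Suc k # drop (Suc (Suc k)) w"
    by (metis Cons_nth_drop_Suc Suc_lessD)
  have dSk: "\<And>w. Suc k < length w \<Longrightarrow> drop (Suc k) w = w!Suc k # drop (Suc (Suc k)) w"
    by (metis Cons_nth_drop_Suc)
  have dQ: "drop (Suc (Suc k)) ?v = drop (Suc (Suc k)) u" by (rule drop_swp_gt) simp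
  have vk: "?v ! k = u ! Suc k" "?v ! Suc k = u ! k" using k by simp_all
  define y where "y = u!k"
  define z where "z = u!Suc k"
  define Q where "Q = drop (Suc (Suc k)) u"
  have yz: "E (fst y) (fst z)" using k unfolding y_def z_def by simp
  have swap: "raag_eq E (z # y # Q) (y # z # Q)"
    using raag_step.comm[of E z y "[]" Q] symE[OF yz] raag_step_eq by simp
  consider "i < k" | "i = k" | "i = Suc k" | "Suc k < i" by linarith
  then show ?thesis
  proof cases
    case 1
    have C: "Cst E (drop i u) (drop i ?v)" unfolding Cst_def
    proof (intro exI[of _ "k - i"] conjI)
      show "Suc (k - i) < length (drop i u)" using 1 k by simp
      show "E (fst (drop i u ! (k - i))) (fst (drop i u ! Suc (k - i)))"
        using 1 k by (simp add: Suc_diff_le)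
      show "drop i ?v = swp (k - i) (drop i u)" using drop_swp_lt[OF 1 k(1)] .
    qed
    have "rc E (?v ! i) (drop i ?v) = rc E (u ! i) (drop i u)"
      using rc_cong[OF raag_eq_sym[OF Cst_raag[OF C]]] 1 k by simp
    then show ?thesis using 1 by (simp add: rcount_rc)
  next
    case 2
    have "rcount E ?v i = rc E z (z # y # Q)"
      using 2 dk[of ?v] k vk dQ unfolding y_def z_def Q_def by (simp add: rcount_rc)
    also have "\<dots> = rc E z (y # z # Q)" by (rule rc_cong[OF swap])
    also have "\<dots> = rc E z (z # Q)" by (rule rc_comm) (use symE[OF yz] in simp)
    also have "\<dots> = rcount E u (tau k i)"
      using 2 dSk[of u] k unfolding y_def z_def Q_def by (simp add: rcount_rc)
    finally show ?thesis .
  next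
    case 3
    have "rcount E ?v i = rc E y (y # Q)"
      using 3 dSk[of ?v] k vk dQ unfolding y_def z_def Q_def by (simp add: rcount_rc)
    also have "\<dots> = rc E y (z # y # Q)" by (rule rc_comm[symmetric]) (use yz in simp)
    also have "\<dots> = rc E y (y # z # Q)" by (rule rc_cong[OF swap])
    also have "\<dots> = rcount E u (tau k i)"
      using 3 dk[of u] k unfolding y_def z_def Q_def by (simp add: rcount_rc)
    finally show ?thesis .
  next
    case 4
    have "drop i ?v = drop i u" by (rule drop_swp_gt[OF 4])
    moreover have "?v ! i = u ! i" using 4 i by simp
    ultimately show ?thesis using 4 by (simp add: rcount_rc)
  qed
qed

lemma sigma_Cst: assumes C: "Cst E u v" shows "raag_eq E (sigma E M u) (sigma E M v)"
proof -
  obtain k where k: "Suc k < length u" "E (fst (u!k)) (fst (u!Suc k))" "v = swp k u"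
    using C unfolding Cst_def by blast
  have Gv: "\<And>i. i < length u \<Longrightarrow> G E M v i = G E M u (tau k i)"
    using k rcount_swp[OF k(1,2)] by (simp add: G_def sig_exp_def)
  have tl: "\<And>i. i < length u \<Longrightarrow> tau k i < length u" using k(1) tau_lt by blast
  let ?A = "concat (map (G E M u) [0..<k])"
  let ?B = "concat (map (G E M u) [Suc (Suc k)..<length u])"
  have su: "sigma E M u = ?A @ (G E M u k @ G E M u (Suc k)) @ ?B"
    unfolding sigma_G using upt_split3[OF k(1)] by simp
  have "sigma E M v = concat (map (G E M v) [0..<length u])" unfolding sigma_G using k by simp
  also have "\<dots> = concat (map (G E M v) [0..<k]) @ (G E M v k @ G E M v (Suc k))
      @ concat (map (G E M v) [Suc (Suc k)..<length u])"
    using upt_split3[OF k(1)] by simp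
  also have "map (G E M v) [0..<k] = map (G E M u) [0..<k]"
    using Gv k(1) by (auto simp: tau_def)
  also have "map (G E M v) [Suc (Suc k)..<length u] = map (G E M u) [Suc (Suc k)..<length u]"
    using Gv by (auto simp: tau_def)
  also have "G E M v k = G E M u (Suc k)" using Gv k(1) by simp
  also have "G E M v (Suc k) = G E M u k" using Gv k(1) by simp
  finally have sv: "sigma E M v = ?A @ (G E M u (Suc k) @ G E M u k) @ ?B" .
  have "raag_eq E (G E M u k @ G E M u (Suc k)) (G E M u (Suc k) @ G E M u k)"
    by (rule comm_block) (use k(2) in \<open>auto simp: G_def dest!: set_gpow\<close>)
  then show ?thesis unfolding su sv by (rule raag_eq_app)
qed

lemma sigma_Cst_rtr: "(Cst E)\<^sup>*\<^sup>* u v \<Longrightarrow> raag_eq E (sigma E M u) (sigma E M v)"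
proof (induction rule: rtranclp_induct)
  case base then show ?case by simp
next
  case (step y z) then show ?case using sigma_Cst raag_eq_trans by blast
qed

end

lemma rcount_bound: "k < length ws \<Longrightarrow> rcount E ws k \<le> length ws - Suc k"
proof -
  assume k: "k < length ws"
  have "drop k ws = [] @ [ws!k] @ drop (Suc k) ws" using k by (simp add: Cons_nth_drop_Suc)
  then have "rcount E ws k \<le> raag_norm E (drop (Suc k) ws)"
    unfolding rcount_def by (intro Least_le) (rule exI[of _ "[]"], rule exI[of _ "drop (Suc k) ws"], auto)
  also have "\<dots> \<le> length (drop (Suc k) ws)" by (rule raag_norm_le) simp
  finally show ?thesis by simp
qed


lemma divmod_aux: "r < (b::nat) \<Longrightarrow> (b * a + r) div b = a \<and> (b * a + r) mod b = r"
  by simp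

lemma pow_aux: "(-2::int) ^ (2 * a) = 4 ^ a" "(-2::int) ^ (2 * a + 1) = -2 * 4 ^ a"
  by (simp_all add: power_mult)

lemma part2:
  fixes n M :: nat and E :: "nat \<Rightarrow> nat \<Rightarrow> bool"
  assumes wo: "word_over n ws" and geo: "length ws = raag_norm E ws" and bd: "raag_norm E ws \<le> M"
    and ce: "canonical_expr E ws"
  shows "\<exists>j :: nat \<Rightarrow> nat. (\<forall>k k'. k < k' \<and> k' < length ws \<longrightarrow> j k < j k')
                  \<and> (\<forall>k < length ws. (fst (ws ! k), sig_exp E M ws k) = useq n (j k))"
proof -
  define f where "f k = rcount E ws k" for k
  define e :: "nat \<Rightarrow> nat" where "e k = (if snd (ws!k) then 0 else 1)" for k
  define p where "p k = fst (ws!k)" for k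
  define j where "j k = 2 * n * (M - 1 - f k) + (2 * p k + e k)" for k
  have fb: "f k \<le> M - 1" if "k < length ws" for k
    using rcount_bound[OF that, of E] geo bd that unfolding f_def by linarith
  have pb: "p k < n" if "k < length ws" for k
    using wo that unfolding word_over_def p_def by auto
  have rb: "2 * p k + e k < 2 * n" if "k < length ws" for k
    using pb[OF that] unfolding e_def by auto
  have mono: "j k < j k'" if kk: "k < k'" "k' < length ws" for k k'
  proof -
    have k: "k < length ws" using kk by simp
    have ff: "f k' \<le> f k" using ce kk unfolding canonical_expr_def f_def by blast
    show ?thesis
    proof (cases "f k' = f k")
      case True
      then have "p k < p k'" using ce kk unfolding canonical_expr_def f_def p_def by auto
      then have "2 * p k + e k < 2 * p k' + e k'" unfolding e_def by auto
      then show ?thesis unfolding j_def using True by simp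
    next
      case False
      then have lt: "M - 1 - f k < M - 1 - f k'" using ff fb[OF k] by linarith
      have "j k < 2 * n * (M - 1 - f k) + 2 * n" unfolding j_def using rb[OF k] by simp
      also have "\<dots> = 2 * n * Suc (M - 1 - f k)" by simp
      also have "\<dots> \<le> 2 * n * (M - 1 - f k')" using lt by (intro mult_le_mono2) simp
      also have "\<dots> \<le> j k'" unfolding j_def by simp
      finally show ?thesis .
    qed
  qed
  have val: "(fst (ws ! k), sig_exp E M ws k) = useq n (j k)" if k: "k < length ws" for k
  proof -
    have dm: "j k div (2 * n) = M - 1 - f k" "j k mod (2 * n) = 2 * p k + e k"
      using divmod_aux[OF rb[OF k], of "M - 1 - f k"] unfolding j_def by auto
    have e2: "(2 * p k + e k) div 2 = p k" "(2 * p k + e k) mod 2 = e k" unfolding e_def by auto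
    show ?thesis
    proof (cases "snd (ws!k)")
      case True
      then show ?thesis unfolding useq_def sig_exp_def using dm e2
        by (simp add: p_def e_def f_def pow_aux power_mult)
    next
      case False
      then show ?thesis unfolding useq_def sig_exp_def using dm e2
        by (simp add: p_def e_def f_def pow_aux power_mult)
    qed
  qed
  show ?thesis using mono val by blast
qed

theorem lemma3p3:
  fixes n M :: nat and E :: "nat \<Rightarrow> nat \<Rightarrow> bool"
  assumes "n \<ge> 1" and "simplicial_graph n E" and "M > 0"
  shows "(\<forall>ws vs. word_over n ws \<and> word_over n vs \<and> raag_eq E ws vs
            \<and> length ws = raag_norm E ws \<and> length vs = length ws \<and> raag_norm E ws \<le> M
            \<longrightarrow> raag_eq E (sigma E M ws) (sigma E M vs))
       \<and> (\<forall>ws. word_over n ws \<and> length ws = raag_norm E ws \<and> raag_norm E ws \<le> M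
            \<and> canonical_expr E ws
            \<longrightarrow> (\<exists>j :: nat \<Rightarrow> nat. (\<forall>k k'. k < k' \<and> k' < length ws \<longrightarrow> j k < j k')
                  \<and> (\<forall>k < length ws. (fst (ws ! k), sig_exp E M ws k) = useq n (j k))))"
proof (intro conjI allI impI)
  have symE: "\<And>a b. E a b \<Longrightarrow> E b a" and irrE: "\<And>a. \<not> E a a"
    using assms(2) unfolding simplicial_graph_def by blast+
  fix ws vs
  assume h: "word_over n ws \<and> word_over n vs \<and> raag_eq E ws vs
            \<and> length ws = raag_norm E ws \<and> length vs = length ws \<and> raag_norm E ws \<le> M"
  have g1: "length ws = raag_norm E ws" using h by blast
  have g2: "length vs = raag_norm E vs" using h raag_norm_cong[of E ws vs] by simp
  have "(Cst E)\<^sup>*\<^sup>* ws vs" using geo_Cst[where E=E, OF symE irrE g1 g2] h by blast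
  then show "raag_eq E (sigma E M ws) (sigma E M vs)"
    using sigma_Cst_rtr[where E=E, OF symE irrE] by blast
next
  fix ws
  assume "word_over n ws \<and> length ws = raag_norm E ws \<and> raag_norm E ws \<le> M \<and> canonical_expr E ws"
  then show "\<exists>j :: nat \<Rightarrow> nat. (\<forall>k k'. k < k' \<and> k' < length ws \<longrightarrow> j k < j k')
                  \<and> (\<forall>k < length ws. (fst (ws ! k), sig_exp E M ws k) = useq n (j k))"
    using part2[of n ws E M] by blast
qed


end
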